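(* Let $G=(V,E)$ be a comparability graph. Then the vertices of the graphical zonotope $\mathcal Z_G=\sum_{\{i,j\}\in E}[e_i-e_j,\,e_j-e_i]$ having maximal Euclidean distance to the origin are precisely those corresponding to the transitive orientations of $E$; that is, among all acyclic orientations $O$ of $E$, the Euclidean norm of the point $(\mathrm{outdeg}_O(v)-\mathrm{indeg}_O(v))_{v\in V}$ is maximized exactly when $O$ is transitive. These are the orientations whose induced posets have the maximal number $\varepsilon(G)$ of linear extensions.
   Context: A comparability graph is a simple undirected graph $G=(V,E)$ for which there is a partial order on $V$ under which two distinct vertices are comparable iff they are adjacent. An acyclic orientation of $E$ induces a partial order on $V$ ($u<v$ iff there is a directed path from $u$ to $v$); it is a transitive orientation if the comparability graph of this induced poset equals $G$. The vertices of $\mathcal Z_G$ correspond bijectively to acyclic orientations $O$ of $E$, the vertex corresponding to $O$ being $(\mathrm{outdeg}_O(v)-\mathrm{indeg}_O(v))_{v\in V}$. $\varepsilon(G)$ denotes the maximum over acyclic orientations of $E$ of the number of linear extensions (order-preserving bijections onto $[|V|]$) of the induced poset. *)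

theory Defs
  imports Complex_Main "HOL-Library.FuncSet"
begin

definition simple_graph :: "'a set \<Rightarrow> 'a set set \<Rightarrow> bool" where
  "simple_graph V E \<longleftrightarrow> finite V \<and>
     (\<forall>e\<in>E. \<exists>u v. e = {u, v} \<and> u \<noteq> v \<and> u \<in> V \<and> v \<in> V)"

definition comparability_graph :: "'a set \<Rightarrow> 'a set set \<Rightarrow> bool" where
  "comparability_graph V E \<longleftrightarrow> simple_graph V E \<and>
     (\<exists>R :: ('a \<times> 'a) set. R \<subseteq> V \<times> V \<and> irrefl R \<and> trans R \<and>
        (\<forall>u\<in>V. \<forall>v\<in>V. u \<noteq> v \<longrightarrow> ({u, v} \<in> E \<longleftrightarrow> (u, v) \<in> R \<or> (v, u) \<in> R)))"

definition orientation :: "'a set set \<Rightarrow> ('a \<times> 'a) set \<Rightarrow> bool" where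
  "orientation E Or \<longleftrightarrow> (\<forall>(u, v)\<in>Or. {u, v} \<in> E \<and> u \<noteq> v) \<and>
     (\<forall>u v. {u, v} \<in> E \<and> u \<noteq> v \<longrightarrow> ((u, v) \<in> Or \<longleftrightarrow> (v, u) \<notin> Or))"

definition acyclic_orientation :: "'a set set \<Rightarrow> ('a \<times> 'a) set \<Rightarrow> bool" where
  "acyclic_orientation E Or \<longleftrightarrow> orientation E Or \<and> acyclic Or"

definition induced_less :: "('a \<times> 'a) set \<Rightarrow> ('a \<times> 'a) set" where
  "induced_less Or = Or\<^sup>+"

definition transitive_orientation :: "'a set set \<Rightarrow> ('a \<times> 'a) set \<Rightarrow> bool" where
  "transitive_orientation E Or \<longleftrightarrow> acyclic_orientation E Or \<and>
     {{u, v} | u v. (u, v) \<in> induced_less Or} = E"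

text \<open>The vertex of the graphical zonotope corresponding to Or: (outdeg - indeg)_v.\<close>
definition zvertex :: "('a \<times> 'a) set \<Rightarrow> 'a \<Rightarrow> int" where
  "zvertex Or v = int (card {w. (v, w) \<in> Or}) - int (card {w. (w, v) \<in> Or})"

definition znorm :: "'a set \<Rightarrow> ('a \<times> 'a) set \<Rightarrow> real" where
  "znorm V Or = sqrt (\<Sum>v\<in>V. (real_of_int (zvertex Or v))\<^sup>2)"

definition linear_extensions :: "'a set \<Rightarrow> ('a \<times> 'a) set \<Rightarrow> ('a \<Rightarrow> nat) set" where
  "linear_extensions V Or = {f \<in> V \<rightarrow>\<^sub>E {1..card V}. bij_betw f V {1..card V} \<and>
      (\<forall>u v. (u, v) \<in> induced_less Or \<longrightarrow> f u < f v)}"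

definition num_linext :: "'a set \<Rightarrow> ('a \<times> 'a) set \<Rightarrow> nat" where
  "num_linext V Or = card (linear_extensions V Or)"

definition eps :: "'a set \<Rightarrow> 'a set set \<Rightarrow> nat" where
  "eps V E = Max {num_linext V Or | Or. acyclic_orientation E Or}"

end

theory Submission
  imports Defs
begin


definition rk :: "'a set \<Rightarrow> ('a \<Rightarrow> nat) \<Rightarrow> 'a \<Rightarrow> nat" where
  "rk V h x = card {y\<in>V. h y < h x}"

lemma rk_mono:
  assumes "finite V" "x \<in> V" "y \<in> V" "h x < h y"
  shows "rk V h x < rk V h y"
proof -
  have "{z\<in>V. h z < h x} \<subset> {z\<in>V. h z < h y}" using assms by auto
  then show ?thesis unfolding rk_def by (rule psubset_card_mono[rotated]) (use assms in auto)
qed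

lemma rk_iff:
  assumes "finite V" "inj_on h V" "x \<in> V" "y \<in> V"
  shows "rk V h x < rk V h y \<longleftrightarrow> h x < h y"
proof
  assume r: "rk V h x < rk V h y"
  show "h x < h y"
  proof (rule ccontr)
    assume "\<not> h x < h y"
    then have "h y < h x \<or> h y = h x" by auto
    then show False
    proof
      assume "h y < h x" then show False using rk_mono[of V y x h, OF assms(1) assms(4) assms(3)] r by auto
    next
      assume "h y = h x" then have "x = y" using assms inj_on_eq_iff by metis
      then show False using r by auto
    qed
  qed
qed (rule rk_mono[OF assms(1,3,4)])

lemma rk_inj:
  assumes "finite V" "inj_on h V"
  shows "inj_on (rk V h) V"
proof (rule inj_onI)
  fix x y assume xy: "x \<in> V" "y \<in> V" "rk V h x = rk V h y"
  show "x = y"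
  proof (rule ccontr)
    assume "x \<noteq> y"
    then have "h x \<noteq> h y" using assms xy inj_on_eq_iff by metis
    then have "h x < h y \<or> h y < h x" by auto
    then show False using rk_mono[of V x y h, OF assms(1) xy(1,2)] rk_mono[of V y x h, OF assms(1) xy(2,1)] xy(3) by auto
  qed
qed

lemma rk_lt:
  assumes "finite V" "x \<in> V"
  shows "rk V h x < card V"
proof -
  have "{y\<in>V. h y < h x} \<subset> V" using assms by auto
  then show ?thesis unfolding rk_def using assms(1) by (rule psubset_card_mono[rotated])
qed

lemma rk_bij:
  assumes "finite V" "inj_on h V"
  shows "bij_betw (\<lambda>x. rk V h x + 1) V {1..card V}"
proof -
  have inj: "inj_on (\<lambda>x. rk V h x + 1) V"
    using rk_inj[OF assms] by (auto simp: inj_on_def)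
  have sub: "(\<lambda>x. rk V h x + 1) ` V \<subseteq> {1..card V}" using rk_lt[of V _ h, OF assms(1)] by fastforce
  have "card ((\<lambda>x. rk V h x + 1) ` V) = card {1..card V}" using card_image[OF inj] by simp
  then have "(\<lambda>x. rk V h x + 1) ` V = {1..card V}" using sub by (intro card_subset_eq) auto
  then show ?thesis using inj unfolding bij_betw_def by auto
qed

definition enum :: "nat set \<Rightarrow> nat \<Rightarrow> nat" where
  "enum A i = sorted_list_of_set A ! (i - 1)"

lemma enum_mono:
  assumes "finite A" "1 \<le> i" "i < j" "j \<le> card A"
  shows "enum A i < enum A j"
proof -
  have "sorted_wrt (<) (sorted_list_of_set A)" by simp
  moreover have "length (sorted_list_of_set A) = card A" by simp
  ultimately show ?thesis unfolding enum_def using assms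
    by (metis diff_less_mono le_eq_less_or_eq less_le_trans One_nat_def Suc_le_eq diff_Suc_less sorted_wrt_nth_less less_imp_diff_less)
qed

lemma enum_image:
  assumes "finite A"
  shows "enum A ` {1..card A} = A"
proof -
  have "enum A ` {1..card A} = (\<lambda>i. sorted_list_of_set A ! i) ` {0..<card A}"
  proof
    show "enum A ` {1..card A} \<subseteq> (\<lambda>i. sorted_list_of_set A ! i) ` {0..<card A}"
      unfolding enum_def by (auto intro!: imageI)
    show "(\<lambda>i. sorted_list_of_set A ! i) ` {0..<card A} \<subseteq> enum A ` {1..card A}"
    proof
      fix a assume "a \<in> (\<lambda>i. sorted_list_of_set A ! i) ` {0..<card A}"
      then obtain i where "i < card A" "a = sorted_list_of_set A ! i" by auto
      then show "a \<in> enum A ` {1..card A}" unfolding enum_def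
        by (intro image_eqI[of _ _ "i+1"]) auto
    qed
  qed
  also have "\<dots> = set (sorted_list_of_set A)"
    by (auto simp: set_conv_nth)
  also have "\<dots> = A" using assms by simp
  finally show ?thesis .
qed



locale spo =
  fixes V :: "'a set" and P :: "('a \<times> 'a) set"
  assumes finV: "finite V" and PV: "P \<subseteq> V \<times> V" and irr: "\<And>x. (x,x) \<notin> P"
    and tr: "\<And>x y z. (x,y) \<in> P \<Longrightarrow> (y,z) \<in> P \<Longrightarrow> (x,z) \<in> P"
begin

definition pcomp :: "'a set \<Rightarrow> bool" where
  "pcomp C \<longleftrightarrow> (\<forall>x\<in>C. \<forall>y\<in>C. x \<noteq> y \<longrightarrow> (x,y)\<in>P \<or> (y,x)\<in>P)"

lemma chain_max:
  assumes "finite C" "C \<noteq> {}" "pcomp C"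
  shows "\<exists>m\<in>C. \<forall>y\<in>C. y = m \<or> (y,m) \<in> P"
  using assms
proof (induction C rule: finite_ne_induct)
  case (singleton x) then show ?case by auto
next
  case (insert x F)
  have "pcomp F" using insert.prems unfolding pcomp_def by blast
  then obtain m where m: "m\<in>F" "\<forall>y\<in>F. y = m \<or> (y,m) \<in> P" using insert.IH by blast
  have "x \<noteq> m" using insert.hyps m(1) by blast
  then have "(x,m)\<in>P \<or> (m,x)\<in>P" using insert.prems m(1) unfolding pcomp_def by blast
  then show ?case
  proof
    assume "(x,m)\<in>P" then show ?case using m by blast
  next
    assume mx: "(m,x)\<in>P"
    have "\<forall>y\<in>insert x F. y = x \<or> (y,x) \<in> P"
    proof
      fix y assume "y \<in> insert x F"
      then show "y = x \<or> (y,x) \<in> P" using m mx tr[of y m x] by auto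
    qed
    then show ?case by blast
  qed
qed

definition smaps :: "nat \<Rightarrow> ('a \<Rightarrow> nat) set" where
  "smaps k = {f \<in> V \<rightarrow>\<^sub>E {1..k}. \<forall>x y. (x,y)\<in>P \<longrightarrow> f x < f y}"

definition bnd :: "nat \<Rightarrow> ('a \<Rightarrow> nat) set" where
  "bnd k = {g \<in> V \<rightarrow>\<^sub>E {1..k}. \<forall>C\<subseteq>V. pcomp C \<longrightarrow> sum g C \<le> k}"

definition pmax :: "('a \<Rightarrow> nat) \<Rightarrow> 'a \<Rightarrow> nat" where
  "pmax f x = Max (insert 0 (f ` {y. (y,x) \<in> P}))"

definition Tr :: "('a \<Rightarrow> nat) \<Rightarrow> 'a \<Rightarrow> nat" where
  "Tr f = (\<lambda>x\<in>V. f x - pmax f x)"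

lemma fin_pred: "finite {y. (y,x) \<in> P}"
  by (rule finite_subset[OF _ finV]) (use PV in auto)

lemma pmax_ge: "(y,x) \<in> P \<Longrightarrow> f y \<le> pmax f x"
  unfolding pmax_def by (rule Max_ge) (use fin_pred in auto)

lemma pmax_lt: assumes f: "f \<in> smaps k" and x: "x \<in> V" shows "pmax f x < f x"
proof -
  have fx: "f x \<in> {1..k}" using f x unfolding smaps_def by auto
  have lt: "\<And>y. (y,x) \<in> P \<Longrightarrow> f y < f x" using f unfolding smaps_def by auto
  have all: "\<forall>a\<in>insert 0 (f ` {y. (y,x) \<in> P}). a < f x" using fx lt by auto
  have "pmax f x \<in> insert 0 (f ` {y. (y,x) \<in> P})" unfolding pmax_def
    by (rule Max_in) (use fin_pred in auto)
  then show ?thesis using all by blast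
qed

lemma chain_sum_Tr:
  assumes f: "f \<in> smaps k"
  shows "finite C \<Longrightarrow> C \<subseteq> V \<Longrightarrow> pcomp C \<Longrightarrow> m \<in> C \<Longrightarrow> (\<forall>y\<in>C. y = m \<or> (y,m) \<in> P)
     \<Longrightarrow> sum (Tr f) C \<le> f m"
proof (induction "card C" arbitrary: C m rule: less_induct)
  case less
  have mV: "m \<in> V" using less by auto
  have s: "sum (Tr f) C = Tr f m + sum (Tr f) (C - {m})"
    using less.prems by (simp add: sum.remove)
  show ?case
  proof (cases "C - {m} = {}")
    case True
    then have "sum (Tr f) (C - {m}) = 0" by (metis sum.empty)
    moreover have "Tr f m \<le> f m" using mV unfolding Tr_def by simp
    ultimately show ?thesis using s by linarith
  next
    case False
    have pc: "pcomp (C - {m})" using less.prems unfolding pcomp_def by auto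
    obtain m' where m': "m' \<in> C - {m}" "\<forall>y\<in>C-{m}. y = m' \<or> (y,m') \<in> P"
      using chain_max[OF _ False pc] less.prems by auto
    have mm: "(m',m) \<in> P" using m' less.prems by auto
    have cl: "card (C - {m}) < card C" using less.prems by (intro card_Diff1_less) auto
    have "sum (Tr f) (C - {m}) \<le> f m'"
      by (rule less.hyps[OF cl]) (use less.prems m' pc in auto)
    moreover have "f m' \<le> pmax f m" using pmax_ge[OF mm] .
    moreover have "pmax f m < f m" using pmax_lt[OF f mV] .
    moreover have "Tr f m = f m - pmax f m" using mV unfolding Tr_def by simp
    ultimately show ?thesis using s by linarith
  qed
qed

lemma Tr_bnd: assumes f: "f \<in> smaps k" shows "Tr f \<in> bnd k"
proof -
  have r: "Tr f \<in> V \<rightarrow>\<^sub>E {1..k}"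
  proof
    fix x assume x: "x \<in> V"
    have "f x \<le> k" using f x unfolding smaps_def by auto
    then show "Tr f x \<in> {1..k}" using pmax_lt[OF f x] x unfolding Tr_def by auto
  next
    fix x assume "x \<notin> V" then show "Tr f x = undefined" unfolding Tr_def by auto
  qed
  have "sum (Tr f) C \<le> k" if C: "C \<subseteq> V" "pcomp C" for C
  proof (cases "C = {}")
    case True then show ?thesis by simp
  next
    case False
    have fC: "finite C" by (rule finite_subset[OF C(1) finV])
    obtain m where m: "m \<in> C" "\<forall>y\<in>C. y = m \<or> (y,m) \<in> P" using chain_max[OF fC False C(2)] by auto
    have "sum (Tr f) C \<le> f m" using chain_sum_Tr[OF f fC C m] .
    also have "f m \<le> k" using f m C unfolding smaps_def by auto
    finally show ?thesis .
  qed
  then show ?thesis using r unfolding bnd_def by auto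
qed


definition chto :: "'a \<Rightarrow> 'a set set" where
  "chto x = {C. C \<subseteq> V \<and> x \<in> C \<and> pcomp C \<and> (\<forall>y\<in>C. y = x \<or> (y,x) \<in> P)}"

definition Iv :: "('a \<Rightarrow> nat) \<Rightarrow> 'a \<Rightarrow> nat" where
  "Iv g = (\<lambda>x\<in>V. Max (sum g ` chto x))"

lemma chto_fin: "finite (chto x)"
proof -
  have "chto x \<subseteq> Pow V" unfolding chto_def by auto
  then show ?thesis using finV by (meson finite_Pow_iff finite_subset)
qed

lemma chto_sing: "x \<in> V \<Longrightarrow> {x} \<in> chto x"
  unfolding chto_def pcomp_def by auto

lemma Iv_ge: "x \<in> V \<Longrightarrow> C \<in> chto x \<Longrightarrow> sum g C \<le> Iv g x"
  unfolding Iv_def using chto_fin by simp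

lemma Iv_attained: "x \<in> V \<Longrightarrow> \<exists>C\<in>chto x. Iv g x = sum g C"
proof -
  assume x: "x \<in> V"
  have "Max (sum g ` chto x) \<in> sum g ` chto x"
    by (rule Max_in) (use chto_fin chto_sing[OF x] in auto)
  then show ?thesis using x unfolding Iv_def by auto
qed

lemma Iv_rec: assumes x: "x \<in> V" shows "Iv g x = g x + pmax (Iv g) x"
proof (rule antisym)
  obtain C where C: "C \<in> chto x" "Iv g x = sum g C" using Iv_attained[OF x] by blast
  have fC: "finite C" using C(1) unfolding chto_def by (auto intro: finite_subset[OF _ finV])
  have xC: "x \<in> C" using C(1) unfolding chto_def by auto
  have s: "sum g C = g x + sum g (C - {x})" using fC xC by (simp add: sum.remove)
  have "sum g (C - {x}) \<le> pmax (Iv g) x"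
  proof (cases "C - {x} = {}")
    case True then show ?thesis by (metis sum.empty zero_le)
  next
    case False
    have pc: "pcomp (C - {x})" using C(1) unfolding chto_def pcomp_def by auto
    obtain y where y: "y \<in> C - {x}" "\<forall>z\<in>C-{x}. z = y \<or> (z,y) \<in> P"
      using chain_max[OF _ False pc] fC by auto
    have yx: "(y,x) \<in> P" using y(1) C(1) unfolding chto_def by auto
    have yV: "y \<in> V" using yx PV by auto
    have "C - {x} \<in> chto y" using C(1) y pc unfolding chto_def by auto
    then have "sum g (C - {x}) \<le> Iv g y" by (rule Iv_ge[OF yV])
    also have "\<dots> \<le> pmax (Iv g) x" by (rule pmax_ge[OF yx])
    finally show ?thesis .
  qed
  then show "Iv g x \<le> g x + pmax (Iv g) x" using C(2) s by linarith
next
  have "pmax (Iv g) x \<in> insert 0 (Iv g ` {y. (y,x) \<in> P})" unfolding pmax_def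
    by (rule Max_in) (use fin_pred in auto)
  then consider "pmax (Iv g) x = 0" | y where "(y,x) \<in> P" "pmax (Iv g) x = Iv g y" by auto
  then show "g x + pmax (Iv g) x \<le> Iv g x"
  proof cases
    case 1
    then show ?thesis using Iv_ge[OF x chto_sing[OF x], of g] by simp
  next
    case 2
    have yV: "y \<in> V" using 2 PV by auto
    obtain C where C: "C \<in> chto y" "Iv g y = sum g C" using Iv_attained[OF yV] by blast
    have fC: "finite C" using C(1) unfolding chto_def by (auto intro: finite_subset[OF _ finV])
    have xC: "x \<notin> C"
    proof
      assume "x \<in> C"
      then have "x = y \<or> (x,y) \<in> P" using C(1) unfolding chto_def by auto
      then show False using 2(1) irr tr[of x y x] by auto
    qed
    have cx: "\<forall>z\<in>C. (z,x) \<in> P"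
    proof
      fix z assume "z \<in> C"
      then have "z = y \<or> (z,y) \<in> P" using C(1) unfolding chto_def by auto
      then show "(z,x) \<in> P" using 2(1) tr[of z y x] by auto
    qed
    have "insert x C \<in> chto x" using C(1) cx x unfolding chto_def pcomp_def by auto
    then have "sum g (insert x C) \<le> Iv g x" by (rule Iv_ge[OF x])
    then show ?thesis using 2(2) C(2) xC fC by simp
  qed
qed

lemma Iv_smaps: assumes g: "g \<in> bnd k" shows "Iv g \<in> smaps k"
proof -
  have gx: "\<And>x. x \<in> V \<Longrightarrow> g x \<in> {1..k}" using g unfolding bnd_def by auto
  have r: "Iv g \<in> V \<rightarrow>\<^sub>E {1..k}"
  proof
    fix x assume x: "x \<in> V"
    obtain C where C: "C \<in> chto x" "Iv g x = sum g C" using Iv_attained[OF x] by blast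
    have "sum g C \<le> k" using g C(1) unfolding bnd_def chto_def by auto
    moreover have "1 \<le> Iv g x" using Iv_rec[OF x, of g] gx[OF x] by simp
    ultimately show "Iv g x \<in> {1..k}" using C(2) by simp
  next
    fix x assume "x \<notin> V" then show "Iv g x = undefined" unfolding Iv_def by auto
  qed
  have "Iv g x < Iv g y" if xy: "(x,y) \<in> P" for x y
  proof -
    have yV: "y \<in> V" using xy PV by auto
    have "Iv g x \<le> pmax (Iv g) y" by (rule pmax_ge[OF xy])
    also have "\<dots> < Iv g y" using Iv_rec[OF yV, of g] gx[OF yV] by simp
    finally show ?thesis .
  qed
  then show ?thesis using r unfolding smaps_def by auto
qed

lemma Tr_Iv: assumes g: "g \<in> bnd k" shows "Tr (Iv g) = g"
proof
  fix x show "Tr (Iv g) x = g x"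
  proof (cases "x \<in> V")
    case True then show ?thesis using Iv_rec[OF True, of g] unfolding Tr_def by simp
  next
    case False then show ?thesis using g unfolding Tr_def bnd_def by (auto simp: PiE_def extensional_def)
  qed
qed

lemma wfP: "wf P"
proof (rule finite_acyclic_wf)
  show "finite P" using finV PV by (meson finite_SigmaI finite_subset)
  have "trans P" using tr unfolding trans_def by blast
  then have "P\<^sup>+ = P" by (rule trancl_id)
  then show "acyclic P" unfolding acyclic_def using irr by auto
qed

lemma Tr_inj: "inj_on Tr (smaps k)"
proof (rule inj_onI)
  fix f f' assume f: "f \<in> smaps k" and f': "f' \<in> smaps k" and eq: "Tr f = Tr f'"
  have "\<forall>x. x \<in> V \<longrightarrow> f x = f' x"
  proof (intro allI)
    fix x show "x \<in> V \<longrightarrow> f x = f' x"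
    proof (induction x rule: wf_induct[OF wfP])
      case (1 x)
      show ?case
      proof
        assume x: "x \<in> V"
        have "f ` {y. (y,x) \<in> P} = f' ` {y. (y,x) \<in> P}"
          using 1 PV by (intro image_cong) auto
        then have pm: "pmax f x = pmax f' x" unfolding pmax_def by simp
        have "Tr f x = Tr f' x" using eq by simp
        then have "f x - pmax f x = f' x - pmax f' x" using x unfolding Tr_def by simp
        then show "f x = f' x" using pm pmax_lt[OF f x] pmax_lt[OF f' x] by linarith
      qed
    qed
  qed
  then show "f = f'"
  proof (intro ext)
    fix x show "f x = f' x"
      by (cases "x \<in> V") (use \<open>\<forall>x. x \<in> V \<longrightarrow> f x = f' x\<close> f f' in \<open>auto simp: smaps_def PiE_def extensional_def\<close>)
  qed
qed

lemma card_smaps_bnd: "card (smaps k) = card (bnd k)"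
proof (rule bij_betw_same_card)
  show "bij_betw Tr (smaps k) (bnd k)"
    unfolding bij_betw_def
  proof
    show "inj_on Tr (smaps k)" by (rule Tr_inj)
    show "Tr ` smaps k = bnd k"
    proof
      show "Tr ` smaps k \<subseteq> bnd k" using Tr_bnd by auto
      show "bnd k \<subseteq> Tr ` smaps k"
      proof
        fix g assume g: "g \<in> bnd k"
        then show "g \<in> Tr ` smaps k" using Tr_Iv[OF g] Iv_smaps[OF g] by (metis imageI)
      qed
    qed
  qed
qed

end


context spo begin

definition lin :: "('a \<Rightarrow> nat) set" where
  "lin = {f \<in> V \<rightarrow>\<^sub>E {1..card V}. bij_betw f V {1..card V} \<and> (\<forall>u v. (u,v)\<in>P \<longrightarrow> f u < f v)}"

lemma fin_smaps: "finite (smaps k)"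
  by (rule finite_subset[of _ "V \<rightarrow>\<^sub>E {1..k}"]) (auto simp: smaps_def finV intro: finite_PiE)

lemma fin_lin: "finite lin"
  by (rule finite_subset[of _ "V \<rightarrow>\<^sub>E {1..card V}"]) (auto simp: lin_def finV intro: finite_PiE)

lemma lower: "card lin * (k choose card V) \<le> card (smaps k)"
proof -
  let ?n = "card V"
  let ?S = "{A. A \<subseteq> {1..k} \<and> card A = ?n}"
  have cS: "card ?S = k choose ?n" using n_subsets[of "{1..k}" ?n] by simp
  define \<Phi> where "\<Phi> = (\<lambda>(L::'a\<Rightarrow>nat, A). \<lambda>x\<in>V. enum A (L x))"
  have Lr: "\<And>L x. L \<in> lin \<Longrightarrow> x \<in> V \<Longrightarrow> L x \<in> {1..?n}" unfolding lin_def by auto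
  have img: "\<Phi> ` (lin \<times> ?S) \<subseteq> smaps k"
  proof
    fix f assume "f \<in> \<Phi> ` (lin \<times> ?S)"
    then obtain L A where LA: "L \<in> lin" "A \<in> ?S" "f = (\<lambda>x\<in>V. enum A (L x))"
      unfolding \<Phi>_def by auto
    have fA: "finite A" using LA(2) finite_subset[of A "{1..k}"] by auto
    have cA: "card A = ?n" using LA(2) by auto
    have "f \<in> V \<rightarrow>\<^sub>E {1..k}"
    proof
      fix x assume x: "x \<in> V"
      have "enum A (L x) \<in> enum A ` {1..card A}" using Lr[OF LA(1) x] cA by auto
      then have "enum A (L x) \<in> A" using enum_image[OF fA] by simp
      then show "f x \<in> {1..k}" using LA(2,3) x by auto
    next
      fix x assume "x \<notin> V" then show "f x = undefined" using LA(3) by auto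
    qed
    moreover have "f u < f v" if uv: "(u,v) \<in> P" for u v
    proof -
      have uV: "u \<in> V" and vV: "v \<in> V" using uv PV by auto
      have "L u < L v" using LA(1) uv unfolding lin_def by auto
      then have "enum A (L u) < enum A (L v)"
        using enum_mono[OF fA] Lr[OF LA(1) uV] Lr[OF LA(1) vV] cA by auto
      then show ?thesis using LA(3) uV vV by auto
    qed
    ultimately show "f \<in> smaps k" unfolding smaps_def by auto
  qed
  have inj: "inj_on \<Phi> (lin \<times> ?S)"
  proof (rule inj_onI)
    fix p q assume p: "p \<in> lin \<times> ?S" and q: "q \<in> lin \<times> ?S" and eq: "\<Phi> p = \<Phi> q"
    obtain L A where pLA: "p = (L, A)" "L \<in> lin" "A \<in> ?S" using p by auto
    obtain L' A' where qLA: "q = (L', A')" "L' \<in> lin" "A' \<in> ?S" using q by auto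
    have eq': "\<And>x. x \<in> V \<Longrightarrow> enum A (L x) = enum A' (L' x)"
      proof -
      fix x assume x: "x \<in> V"
      have "\<Phi> p x = \<Phi> q x" using eq by simp
      then show "enum A (L x) = enum A' (L' x)" using x pLA(1) qLA(1) unfolding \<Phi>_def by simp
    qed
    have fA: "finite A" using pLA(3) finite_subset[of A "{1..k}"] by auto
    have fA': "finite A'" using qLA(3) finite_subset[of A' "{1..k}"] by auto
    have LV: "L ` V = {1..?n}" using pLA(2) unfolding lin_def bij_betw_def by auto
    have LV': "L' ` V = {1..?n}" using qLA(2) unfolding lin_def bij_betw_def by auto
    have "A = enum A ` (L ` V)" using enum_image[OF fA] pLA(3) LV by simp
    also have "\<dots> = (\<lambda>x. enum A (L x)) ` V" by auto
    also have "\<dots> = (\<lambda>x. enum A' (L' x)) ` V" using eq' by auto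
    also have "\<dots> = enum A' ` (L' ` V)" by auto
    also have "\<dots> = A'" using enum_image[OF fA'] qLA(3) LV' by simp
    finally have AA: "A = A'" .
    have "L x = L' x" for x
    proof (cases "x \<in> V")
      case True
      have a: "L x \<in> {1..?n}" "L' x \<in> {1..?n}" using True LV LV' by auto
      have e: "enum A (L x) = enum A (L' x)" using eq'[OF True] AA by simp
      show ?thesis
      proof (rule ccontr)
        assume "L x \<noteq> L' x"
        then have "L x < L' x \<or> L' x < L x" by auto
        then show False using enum_mono[OF fA, of "L x" "L' x"] enum_mono[OF fA, of "L' x" "L x"] a e pLA(3)
          by auto
      qed
    next
      case False then show ?thesis using pLA(2) qLA(2) unfolding lin_def by (auto simp: PiE_def extensional_def)
    qed
    then have "L = L'" by auto
    then show "p = q" using AA pLA qLA by simp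
  qed
  have "card (lin \<times> ?S) \<le> card (smaps k)" by (rule card_inj_on_le[OF inj img fin_smaps])
  then show ?thesis using cS by (simp add: card_cartesian_product)
qed


lemma upper: "card (smaps k) \<le> card lin * ((k + card V - 1) choose card V)"
proof -
  let ?n = "card V"
  let ?S = "{A. A \<subseteq> {1..k + ?n - 1} \<and> card A = ?n}"
  have cS: "card ?S = (k + ?n - 1) choose ?n" using n_subsets[of "{1..k + ?n - 1}" ?n] by simp
  have finS: "finite ?S" by (rule finite_subset[of _ "Pow {1..k + ?n - 1}"]) auto
  obtain \<tau> where tau: "bij_betw \<tau> V {0..<?n}" using ex_bij_betw_finite_nat[OF finV] by blast
  have tlt: "\<And>x. x \<in> V \<Longrightarrow> \<tau> x < ?n" using tau unfolding bij_betw_def by auto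
  have tinj: "inj_on \<tau> V" using tau unfolding bij_betw_def by auto
  define K where "K f x = f x * ?n + \<tau> x" for f :: "'a \<Rightarrow> nat" and x
  define r where "r f x = rk V (K f) x" for f x
  define R where "R f = (\<lambda>x\<in>V. r f x + 1)" for f
  define \<psi> where "\<psi> f x = f x + r f x" for f :: "'a \<Rightarrow> nat" and x
  define \<Psi> where "\<Psi> f = (R f, \<psi> f ` V)" for f
  have Klt: "K f x < K f y" if "x \<in> V" "y \<in> V" "f x < f y" for f x y
  proof -
    have "K f x < (f x + 1) * ?n" unfolding K_def using tlt[OF that(1)] by simp
    also have "\<dots> \<le> f y * ?n" using that(3) by (intro mult_right_mono) auto
    also have "\<dots> \<le> K f y" unfolding K_def by simp
    finally show ?thesis .
  qed
  have Kinj: "inj_on (K f) V" for f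
  proof (rule inj_onI)
    fix x y assume xy: "x \<in> V" "y \<in> V" "K f x = K f y"
    have "K f x mod ?n = \<tau> x" unfolding K_def using tlt[OF xy(1)] by simp
    moreover have "K f y mod ?n = \<tau> y" unfolding K_def using tlt[OF xy(2)] by simp
    ultimately have "\<tau> x = \<tau> y" using xy(3) by simp
    then show "x = y" using tinj xy by (meson inj_onD)
  qed
  have Kle: "f x \<le> f y" if "x \<in> V" "y \<in> V" "K f x < K f y" for f x y
    using Klt[OF that(2,1), of f] that(3) by (meson less_asym not_le)
  have rlt: "\<And>f x. x \<in> V \<Longrightarrow> r f x < ?n" unfolding r_def using rk_lt[OF finV] by blast
  have rinj: "inj_on (r f) V" for f unfolding r_def using rk_inj[OF finV Kinj] .
  have riff: "r f x < r f y \<longleftrightarrow> K f x < K f y" if "x \<in> V" "y \<in> V" for f x y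
    unfolding r_def using rk_iff[OF finV Kinj that] .
  have psimono: "\<psi> f x < \<psi> f y" if "x \<in> V" "y \<in> V" "r f x < r f y" for f x y
  proof -
    have "K f x < K f y" using riff[OF that(1,2)] that(3) by simp
    then have "f x \<le> f y" by (rule Kle[OF that(1,2)])
    then show ?thesis using that(3) unfolding \<psi>_def by linarith
  qed
  have psiiff: "\<psi> f x < \<psi> f y \<longleftrightarrow> r f x < r f y" if "x \<in> V" "y \<in> V" for f x y
  proof
    assume a: "\<psi> f x < \<psi> f y"
    show "r f x < r f y"
    proof (rule ccontr)
      assume "\<not> r f x < r f y"
      then have "r f y < r f x \<or> r f y = r f x" by auto
      then show False
      proof
        assume "r f y < r f x" then show False using psimono[OF that(2,1)] a by fastforce
      next
        assume "r f y = r f x" then have "x = y" using rinj that by (metis inj_onD)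
        then show False using a by simp
      qed
    qed
  qed (rule psimono[OF that])
  have psiinj: "inj_on (\<psi> f) V" for f
  proof (rule inj_onI)
    fix x y assume xy: "x \<in> V" "y \<in> V" "\<psi> f x = \<psi> f y"
    show "x = y"
    proof (rule ccontr)
      assume "x \<noteq> y"
      then have "r f x \<noteq> r f y" using rinj xy by (metis inj_onD)
      then have "r f x < r f y \<or> r f y < r f x" by auto
      then show False using psimono[OF xy(1,2)] psimono[OF xy(2,1)] xy(3) by fastforce
    qed
  qed
  have img: "\<Psi> ` smaps k \<subseteq> lin \<times> ?S"
  proof
    fix p assume "p \<in> \<Psi> ` smaps k"
    then obtain f where f: "f \<in> smaps k" "p = \<Psi> f" by auto
    have fr: "\<And>x. x \<in> V \<Longrightarrow> f x \<in> {1..k}" using f(1) unfolding smaps_def by auto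
    have bij: "bij_betw (R f) V {1..?n}"
    proof -
      have "bij_betw (\<lambda>x. r f x + 1) V {1..?n}" unfolding r_def by (rule rk_bij[OF finV Kinj])
      moreover have "\<And>x. x \<in> V \<Longrightarrow> R f x = r f x + 1" unfolding R_def by simp
      ultimately show ?thesis by (metis (no_types, lifting) bij_betw_cong)
    qed
    have "R f \<in> lin"
    proof -
      have "R f \<in> V \<rightarrow>\<^sub>E {1..?n}" using bij unfolding R_def bij_betw_def by auto
      moreover have "R f u < R f v" if uv: "(u,v) \<in> P" for u v
      proof -
        have uV: "u \<in> V" and vV: "v \<in> V" using uv PV by auto
        have "f u < f v" using f(1) uv unfolding smaps_def by auto
        then have "r f u < r f v" using riff[OF uV vV] Klt[OF uV vV] by auto
        then show ?thesis unfolding R_def using uV vV by simp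
      qed
      ultimately show ?thesis using bij unfolding lin_def by auto
    qed
    moreover have "\<psi> f ` V \<in> ?S"
    proof -
      have "\<psi> f ` V \<subseteq> {1..k + ?n - 1}"
      proof
        fix a assume "a \<in> \<psi> f ` V"
        then obtain x where x: "x \<in> V" "a = \<psi> f x" by auto
        show "a \<in> {1..k + ?n - 1}" using fr[OF x(1)] rlt[OF x(1), of f] x(2) unfolding \<psi>_def by auto
      qed
      moreover have "card (\<psi> f ` V) = ?n" using card_image[OF psiinj] by simp
      ultimately show ?thesis by simp
    qed
    ultimately show "p \<in> lin \<times> ?S" using f(2) unfolding \<Psi>_def by simp
  qed
  have inj: "inj_on \<Psi> (smaps k)"
  proof (rule inj_onI)
    fix f f' assume f: "f \<in> smaps k" and f': "f' \<in> smaps k" and eq: "\<Psi> f = \<Psi> f'"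
    have RR: "R f = R f'" and AA: "\<psi> f ` V = \<psi> f' ` V" using eq unfolding \<Psi>_def by auto
    define A where "A = \<psi> f ` V"
    have finA: "finite A" unfolding A_def using finV by simp
    have rr: "\<And>x. x \<in> V \<Longrightarrow> r f x = r f' x"
    proof -
      fix x assume x: "x \<in> V"
      have "R f x = R f' x" using RR by simp
      then show "r f x = r f' x" using x unfolding R_def by simp
    qed
    have rkA: "rk A id (\<psi> g x) = card {y\<in>V. r g y < r g x}"
      if g: "\<psi> g ` V = A" and x: "x \<in> V" for g x
    proof -
      have "{a\<in>A. id a < id (\<psi> g x)} = \<psi> g ` {y\<in>V. r g y < r g x}"
        using g psiiff[OF _ x] by auto
      then have "rk A id (\<psi> g x) = card (\<psi> g ` {y\<in>V. r g y < r g x})" unfolding rk_def by simp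
      also have "\<dots> = card {y\<in>V. r g y < r g x}"
        by (rule card_image) (rule inj_on_subset[OF psiinj]; auto)
      finally show ?thesis .
    qed
    have "f x = f' x" for x
    proof (cases "x \<in> V")
      case True
      have "rk A id (\<psi> f x) = rk A id (\<psi> f' x)"
        using rkA[of f x] rkA[of f' x] True AA rr unfolding A_def
        by (smt (verit, best) Collect_cong)
      moreover have "\<psi> f x \<in> A" "\<psi> f' x \<in> A" using True AA unfolding A_def by auto
      ultimately have "\<psi> f x = \<psi> f' x" using rk_inj[of A id, OF finA inj_on_id] by (auto simp: inj_on_def)
      then show ?thesis using rr[OF True] unfolding \<psi>_def by simp
    next
      case False then show ?thesis using f f' unfolding smaps_def by (auto simp: PiE_def extensional_def)
    qed
    then show "f = f'" by auto
  qed
  have "card (smaps k) \<le> card (lin \<times> ?S)"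
    by (rule card_inj_on_le[OF inj img]) (use fin_lin finS in auto)
  then show ?thesis using cS by (simp add: card_cartesian_product)
qed

end


lemma binom_lower:
  assumes "k \<le> m"
  shows "(real m - real k) ^ k \<le> fact k * real (m choose k)"
proof -
  have "fact k * real (m choose k) = fact k * (real m gchoose k)" by (simp add: binomial_gbinomial)
  also have "\<dots> = (\<Prod>i = 0..<k. real m - of_nat i)" by (rule gbinomial_mult_fact)
  finally have e: "fact k * real (m choose k) = (\<Prod>i = 0..<k. real m - real i)" .
  have "(\<Prod>i = 0..<k. real m - real k) \<le> (\<Prod>i = 0..<k. real m - real i)"
    by (rule prod_mono) (use assms in auto)
  then show ?thesis using e by simp
qed

lemma binom_upper: "fact k * real (m choose k) \<le> real m ^ k"
proof -
  have "(m choose k) * fact k \<le> m ^ k" by (rule binomial_fact_pow)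
  then have "real ((m choose k) * fact k) \<le> real (m ^ k)" by (simp only: of_nat_le_iff)
  then show ?thesis by (simp add: mult.commute)
qed

lemma asym:
  fixes eP eQ n :: nat and c :: real
  assumes H: "\<And>t. t \<ge> 1 \<Longrightarrow> real eP * real ((2*n*t) choose n) + c * real t ^ n
                 \<le> real eQ * real ((2*n*t + n - 1) choose n)"
  shows "real eP * (2*real n)^n + c * fact n \<le> real eQ * (2*real n)^n"
proof -
  define X where "X t = real eP * (2*real n - real n / real t)^n + c * fact n" for t :: nat
  define Y where "Y t = real eQ * (2*real n + real n / real t)^n" for t :: nat
  have XY: "X t \<le> Y t" if t: "t \<ge> 1" for t
  proof -
    have tp: "real t > 0" using t by simp
    have h: "real eP * real ((2*n*t) choose n) + c * real t ^ n
                 \<le> real eQ * real ((2*n*t + n - 1) choose n)" using H[OF t] .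
    have fp: "fact n > (0::real)" by simp
    have h2: "real eP * (fact n * real ((2*n*t) choose n)) + c * fact n * real t ^ n
                 \<le> real eQ * (fact n * real ((2*n*t + n - 1) choose n))"
      using mult_left_mono[OF h, of "fact n"] fp by (simp add: algebra_simps)
    have l1: "(real (2*n*t) - real n)^n \<le> fact n * real ((2*n*t) choose n)"
      by (rule binom_lower) (use t in \<open>auto simp: mult.assoc\<close>)
    have u1: "fact n * real ((2*n*t + n - 1) choose n) \<le> real (2*n*t + n - 1) ^ n" by (rule binom_upper)
    have u2: "real (2*n*t + n - 1) ^ n \<le> (real (2*n*t) + real n) ^ n"
    proof (rule power_mono)
      have "2*n*t + n - 1 \<le> 2*n*t + n" by simp
      then show "real (2*n*t + n - 1) \<le> real (2*n*t) + real n" by (metis of_nat_add of_nat_le_iff)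
    qed simp
    have "real eP * (real (2*n*t) - real n)^n + c * fact n * real t ^ n
          \<le> real eQ * (real (2*n*t) + real n) ^ n"
    proof -
      have "real eP * (real (2*n*t) - real n)^n \<le> real eP * (fact n * real ((2*n*t) choose n))"
        by (rule mult_left_mono[OF l1]) simp
      moreover have "real eQ * (fact n * real ((2*n*t + n - 1) choose n)) \<le> real eQ * (real (2*n*t) + real n) ^ n"
        by (rule mult_left_mono[OF order.trans[OF u1 u2]]) simp
      ultimately show ?thesis using h2 by linarith
    qed
    moreover have "(real (2*n*t) - real n)^n = real t^n * (2*real n - real n / real t)^n"
    proof -
      have "(real (2*n*t) - real n) = real t * (2*real n - real n / real t)"
        using tp by (simp add: field_simps)
      then show ?thesis by (simp add: power_mult_distrib)
    qed
    moreover have "(real (2*n*t) + real n)^n = real t^n * (2*real n + real n / real t)^n"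
    proof -
      have "(real (2*n*t) + real n) = real t * (2*real n + real n / real t)"
        using tp by (simp add: field_simps)
      then show ?thesis by (simp add: power_mult_distrib)
    qed
    ultimately have "real t ^ n * X t \<le> real t ^ n * Y t"
      unfolding X_def Y_def by (simp add: algebra_simps)
    then show ?thesis using tp by (simp add: mult_le_cancel_left_pos)
  qed
  have lX: "X \<longlonglongrightarrow> real eP * (2*real n)^n + c * fact n"
    unfolding X_def by (intro tendsto_intros) (rule lim_const_over_n[THEN tendsto_diff[OF tendsto_const], simplified])
  have lY: "Y \<longlonglongrightarrow> real eQ * (2*real n)^n"
    unfolding Y_def by (intro tendsto_intros) (rule lim_const_over_n[THEN tendsto_add[OF tendsto_const], simplified])
  show ?thesis by (rule LIMSEQ_le[OF lX lY]) (use XY in auto)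
qed



lemma asym_nat:
  fixes eP eQ n c :: nat
  assumes H: "\<And>t. t \<ge> 1 \<Longrightarrow> eP * ((2*n*t) choose n) + c * t ^ n \<le> eQ * ((2*n*t + n - 1) choose n)"
  shows "real eP * (2*real n)^n + real c * fact n \<le> real eQ * (2*real n)^n"
proof (rule asym)
  fix t :: nat assume t: "t \<ge> 1"
  have "real (eP * ((2*n*t) choose n) + c * t ^ n) \<le> real (eQ * ((2*n*t + n - 1) choose n))"
    using H[OF t] by (simp only: of_nat_le_iff)
  then show "real eP * real ((2*n*t) choose n) + real c * real t ^ n \<le> real eQ * real ((2*n*t + n - 1) choose n)"
    by simp
qed

lemma compare:
  assumes finV: "finite V"
    and P: "P \<subseteq> V \<times> V" "\<forall>x. (x,x) \<notin> P" "\<forall>x y z. (x,y) \<in> P \<longrightarrow> (y,z) \<in> P \<longrightarrow> (x,z) \<in> P"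
    and Q: "Q \<subseteq> V \<times> V" "\<forall>x. (x,x) \<notin> Q" "\<forall>x y z. (x,y) \<in> Q \<longrightarrow> (y,z) \<in> Q \<longrightarrow> (x,z) \<in> Q"
    and QP: "\<forall>x y. (x,y) \<in> Q \<longrightarrow> (x,y) \<in> P \<or> (y,x) \<in> P"
  shows "card (spo.lin V P) \<le> card (spo.lin V Q)"
    and "(\<exists>a b. (a,b) \<in> P \<and> (a,b) \<notin> Q \<and> (b,a) \<notin> Q) \<Longrightarrow> card (spo.lin V P) < card (spo.lin V Q)"
proof -
  interpret p: spo V P using finV P by unfold_locales blast+
  interpret q: spo V Q using finV Q by unfold_locales blast+
  let ?n = "card V"
  have pq_comp: "q.pcomp C \<Longrightarrow> p.pcomp C" for C
    unfolding p.pcomp_def q.pcomp_def using QP by blast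
  have bsub: "p.bnd k \<subseteq> q.bnd k" for k
    unfolding p.bnd_def q.bnd_def using pq_comp by auto
  have finqb: "finite (q.bnd k)" for k
    by (rule finite_subset[of _ "V \<rightarrow>\<^sub>E {1..k}"]) (auto simp: q.bnd_def finV intro: finite_PiE)
  have key: "card (p.smaps k) + c \<le> card (q.smaps k)"
    if "c \<le> card (q.bnd k - p.bnd k)" for k c
  proof -
    have "card (q.bnd k) = card (p.bnd k) + card (q.bnd k - p.bnd k)"
      using card_Diff_subset[OF finite_subset[OF bsub[of k] finqb[of k]] bsub[of k]] card_mono[OF finqb[of k] bsub[of k]]
      by linarith
    then show ?thesis using that p.card_smaps_bnd q.card_smaps_bnd by simp
  qed
  have gen: "card p.lin * ((2*?n*t) choose ?n) + c * t ^ ?n \<le> card q.lin * ((2*?n*t + ?n - 1) choose ?n)"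
    if "c * t ^ ?n \<le> card (q.bnd (2*?n*t) - p.bnd (2*?n*t))" for t c
  proof -
    have "card p.lin * ((2*?n*t) choose ?n) + c * t ^ ?n \<le> card (p.smaps (2*?n*t)) + c * t ^ ?n"
      using p.lower by simp
    also have "\<dots> \<le> card (q.smaps (2*?n*t))" by (rule key[OF that])
    also have "\<dots> \<le> card q.lin * ((2*?n*t + ?n - 1) choose ?n)" by (rule q.upper)
    finally show ?thesis .
  qed
  have pos: "(2 * real ?n) ^ ?n > 0"
    by (cases "?n = 0") auto
  show "card p.lin \<le> card q.lin"
  proof -
    have "real (card p.lin) * (2*real ?n)^?n + real 0 * fact ?n \<le> real (card q.lin) * (2*real ?n)^?n"
      by (rule asym_nat) (rule gen, simp)
    then show ?thesis using pos by (simp add: mult_le_cancel_right)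
  qed
  assume "\<exists>a b. (a,b) \<in> P \<and> (a,b) \<notin> Q \<and> (b,a) \<notin> Q"
  then obtain a b where ab: "(a,b) \<in> P" "(a,b) \<notin> Q" "(b,a) \<notin> Q" by blast
  have aV: "a \<in> V" and bV: "b \<in> V" using ab P(1) by auto
  have anb: "a \<noteq> b" using ab P(2) by blast
  have n2: "?n \<ge> 2"
  proof -
    have "{a,b} \<subseteq> V" using aV bV by auto
    then have "card {a,b} \<le> ?n" by (rule card_mono[OF finV])
    then show ?thesis using anb by simp
  qed
  have cVab: "card (V - {a,b}) = ?n - 2" using aV bV anb finV by (simp add: card_Diff_subset)
  have extra: "1 * t ^ ?n \<le> card (q.bnd (2*?n*t) - p.bnd (2*?n*t))" if t: "t \<ge> 1" for t
  proof -
    define B where "B x = (if x \<in> {a,b} then {?n*t+1..(?n+1)*t} else {1..t})" for x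
    have cB: "card (B x) = t" for x unfolding B_def by auto
    have cG: "card (Pi\<^sub>E V B) = t ^ ?n" using card_PiE[OF finV, of B] cB by simp
    have Bsub: "B x \<subseteq> {1..2*?n*t}" for x
    proof -
      have "(?n+1)*t \<le> 2*?n*t" using n2 by (simp add: algebra_simps)
      moreover have "t \<le> 2*?n*t" using n2 by simp
      ultimately show ?thesis unfolding B_def by auto
    qed
    have "Pi\<^sub>E V B \<subseteq> q.bnd (2*?n*t) - p.bnd (2*?n*t)"
    proof
      fix g assume g: "g \<in> Pi\<^sub>E V B"
      have gr: "g \<in> V \<rightarrow>\<^sub>E {1..2*?n*t}"
      proof
        fix x assume "x \<in> V" then have "g x \<in> B x" using g by auto
        then show "g x \<in> {1..2*?n*t}" using Bsub[of x] by blast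
      next
        fix x assume "x \<notin> V" then show "g x = undefined" using g by auto
      qed
      have gab: "g a \<ge> ?n*t+1" "g b \<ge> ?n*t+1" using g aV bV unfolding B_def by (auto simp: PiE_def Pi_def)
      have gle: "g x \<le> (?n+1)*t" if "x \<in> V" for x
      proof -
        have "g x \<in> B x" using g that by auto
        moreover have "t \<le> (?n+1)*t" by simp
        ultimately show ?thesis unfolding B_def by (auto split: if_splits)
      qed
      have gle2: "g x \<le> t" if "x \<in> V" "x \<notin> {a,b}" for x
      proof -
        have "g x \<in> B x" using g that by auto
        then show ?thesis unfolding B_def using that by auto
      qed
      have "sum g C \<le> 2*?n*t" if C: "C \<subseteq> V" "q.pcomp C" for C
      proof -
        have fC: "finite C" using C(1) finV by (rule finite_subset)
        have nab: "\<not> (a \<in> C \<and> b \<in> C)" using C(2) ab anb unfolding q.pcomp_def by blast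
        have s: "sum g C = sum g (C \<inter> {a,b}) + sum g (C - {a,b})"
          using fC by (rule sum.Int_Diff)
        have s1: "sum g (C \<inter> {a,b}) \<le> (?n+1)*t"
        proof (cases "a \<in> C")
          case True then have "C \<inter> {a,b} = {a}" using nab by auto
          then show ?thesis using gle[OF aV] by simp
        next
          case False
          show ?thesis
          proof (cases "b \<in> C")
            case True then have "C \<inter> {a,b} = {b}" using False by auto
            then show ?thesis using gle[OF bV] by simp
          next
            case False2: False
            then have "C \<inter> {a,b} = {}" using False by auto
            then show ?thesis by simp
          qed
        qed
        have "sum g (C - {a,b}) \<le> card (C - {a,b}) * t"
          using sum_bounded_above[of "C - {a,b}" g t] gle2 C(1) by auto
        also have "\<dots> \<le> card (V - {a,b}) * t"
          by (rule mult_right_mono) (use C(1) finV in \<open>auto intro: card_mono\<close>)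
        also have "\<dots> = (?n - 2) * t" using cVab by simp
        finally have s2: "sum g (C - {a,b}) \<le> (?n - 2) * t" .
        have "(?n+1)*t + (?n-2)*t \<le> 2*?n*t"
        proof -
          have "(?n+1)*t + (?n-2)*t = (?n+1 + (?n-2))*t" by (simp add: algebra_simps)
          also have "\<dots> \<le> (2*?n)*t" using n2 by (intro mult_right_mono) auto
          finally show ?thesis by simp
        qed
        then show ?thesis using s s1 s2 by linarith
      qed
      then have "g \<in> q.bnd (2*?n*t)" using gr unfolding q.bnd_def by auto
      moreover have "g \<notin> p.bnd (2*?n*t)"
      proof
        assume "g \<in> p.bnd (2*?n*t)"
        moreover have "{a,b} \<subseteq> V" "p.pcomp {a,b}" using aV bV ab unfolding p.pcomp_def by auto
        ultimately have "sum g {a,b} \<le> 2*?n*t" unfolding p.bnd_def by auto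
        then show False using gab anb by simp
      qed
      ultimately show "g \<in> q.bnd (2*?n*t) - p.bnd (2*?n*t)" by simp
    qed
    then have "card (Pi\<^sub>E V B) \<le> card (q.bnd (2*?n*t) - p.bnd (2*?n*t))"
      by (rule card_mono[OF finite_Diff[OF finqb]])
    then show ?thesis using cG by simp
  qed
  have "real (card p.lin) * (2*real ?n)^?n + real 1 * fact ?n \<le> real (card q.lin) * (2*real ?n)^?n"
    by (rule asym_nat) (rule gen, rule extra)
  then have "real (card p.lin) * (2*real ?n)^?n < real (card q.lin) * (2*real ?n)^?n"
  proof -
    have f0: "(0::real) < fact ?n" by simp
    have h1: "real 1 * fact ?n = (fact ?n :: real)" by simp
    show ?thesis using f0 h1 \<open>real (card p.lin) * (2*real ?n)^?n + real 1 * fact ?n \<le> real (card q.lin) * (2*real ?n)^?n\<close> by linarith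
  qed
  then show "card p.lin < card q.lin" using pos by (simp add: mult_less_cancel_right)
qed



lemma sg_edge:
  assumes "simple_graph V E" "{u,v} \<in> E"
  shows "u \<in> V" "v \<in> V" "u \<noteq> v"
proof -
  obtain a b where "{u,v} = {a,b}" "a \<noteq> b" "a \<in> V" "b \<in> V"
    using assms unfolding simple_graph_def by blast
  then show "u \<in> V" "v \<in> V" "u \<noteq> v" by (auto simp: doubleton_eq_iff)
qed

lemma or_arc:
  assumes "orientation E Or" "(u,v) \<in> Or"
  shows "{u,v} \<in> E" "u \<noteq> v" "(v,u) \<notin> Or"
proof -
  show e: "{u,v} \<in> E" "u \<noteq> v" using assms unfolding orientation_def by auto
  show "(v,u) \<notin> Or" using assms e unfolding orientation_def by blast
qed

lemma or_edge:
  assumes "orientation E Or" "{u,v} \<in> E" "u \<noteq> v"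
  shows "(u,v) \<in> Or \<or> (v,u) \<in> Or"
  using assms unfolding orientation_def by blast

lemma or_sub:
  assumes "simple_graph V E" "orientation E Or"
  shows "Or \<subseteq> V \<times> V"
proof
  fix p assume "p \<in> Or"
  then obtain u v where p: "p = (u,v)" "(u,v) \<in> Or" by (cases p) auto
  then have "{u,v} \<in> E" using or_arc[OF assms(2)] by auto
  then show "p \<in> V \<times> V" using sg_edge[OF assms(1)] p by auto
qed

lemma acyc_no3:
  assumes "acyclic Or" "(a,b) \<in> Or" "(b,c) \<in> Or" "(c,a) \<in> Or"
  shows False
proof -
  have "(a,a) \<in> Or\<^sup>+" using assms(2-4) by (meson trancl.r_into_trancl trancl_into_trancl)
  then show False using assms(1) unfolding acyclic_def by blast
qed

definition Ti :: "'a set set \<Rightarrow> ('a \<times> 'a) set \<Rightarrow> ('a \<times> 'a \<times> 'a) set" where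
  "Ti E Or = {(v,w,w'). (w,v) \<in> Or \<and> (v,w') \<in> Or \<and> {w,w'} \<notin> E}"

definition Tt :: "'a set set \<Rightarrow> ('a \<times> 'a) set \<Rightarrow> ('a \<times> 'a \<times> 'a) set" where
  "Tt E Or = {(v,w,w'). (w,v) \<in> Or \<and> (v,w') \<in> Or \<and> {w,w'} \<in> E}"

lemma trans_char:
  assumes sg: "simple_graph V E" and ao: "acyclic_orientation E Or"
  shows "transitive_orientation E Or \<longleftrightarrow> Ti E Or = {}"
proof
  assume "transitive_orientation E Or"
  then have eq: "{{u, v} | u v. (u, v) \<in> Or\<^sup>+} = E" unfolding transitive_orientation_def induced_less_def by auto
  show "Ti E Or = {}"
  proof (rule ccontr)
    assume "Ti E Or \<noteq> {}"
    then obtain v w w' where "(w,v) \<in> Or" "(v,w') \<in> Or" "{w,w'} \<notin> E" unfolding Ti_def by auto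
    moreover have "(w,w') \<in> Or\<^sup>+" using calculation by (meson trancl.r_into_trancl trancl_into_trancl)
    ultimately show False using eq by blast
  qed
next
  assume ti: "Ti E Or = {}"
  have or: "orientation E Or" and ac: "acyclic Or" using ao unfolding acyclic_orientation_def by auto
  have tO: "trans Or"
  proof (rule transI)
    fix x y z assume xy: "(x,y) \<in> Or" and yz: "(y,z) \<in> Or"
    have e: "{x,z} \<in> E" using ti xy yz unfolding Ti_def by auto
    have "x \<noteq> z" using or_arc[OF or xy] yz by auto
    then have "(x,z) \<in> Or \<or> (z,x) \<in> Or" using or_edge[OF or e] by auto
    then show "(x,z) \<in> Or" using acyc_no3[OF ac xy yz] by auto
  qed
  then have tc: "Or\<^sup>+ = Or" by (rule trancl_id)
  have "{{u, v} | u v. (u, v) \<in> Or\<^sup>+} = E"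
  proof
    show "{{u, v} | u v. (u, v) \<in> Or\<^sup>+} \<subseteq> E" using tc or_arc[OF or] by auto
    show "E \<subseteq> {{u, v} | u v. (u, v) \<in> Or\<^sup>+}"
    proof
      fix e assume eE: "e \<in> E"
      then obtain u v where uv: "e = {u,v}" "u \<noteq> v" using sg unfolding simple_graph_def by blast
      then have "(u,v) \<in> Or \<or> (v,u) \<in> Or" using or_edge[OF or] eE by auto
      then show "e \<in> {{u, v} | u v. (u, v) \<in> Or\<^sup>+}" using uv tc by (auto simp: insert_commute)
    qed
  qed
  then show "transitive_orientation E Or" using ao unfolding transitive_orientation_def induced_less_def by auto
qed

lemma trans_tc:
  assumes sg: "simple_graph V E" and t: "transitive_orientation E Or"
  shows "Or\<^sup>+ = Or"
proof -
  have ao: "acyclic_orientation E Or" using t unfolding transitive_orientation_def by auto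
  have or: "orientation E Or" and ac: "acyclic Or" using ao unfolding acyclic_orientation_def by auto
  have ti: "Ti E Or = {}" using trans_char[OF sg ao] t by auto
  have "trans Or"
  proof (rule transI)
    fix x y z assume xy: "(x,y) \<in> Or" and yz: "(y,z) \<in> Or"
    have e: "{x,z} \<in> E" using ti xy yz unfolding Ti_def by auto
    have "x \<noteq> z" using or_arc[OF or xy] yz by auto
    then have "(x,z) \<in> Or \<or> (z,x) \<in> Or" using or_edge[OF or e] by auto
    then show "(x,z) \<in> Or" using acyc_no3[OF ac xy yz] by auto
  qed
  then show ?thesis by (rule trancl_id)
qed



lemma tri_inj_aux:
  assumes as: "\<And>x y. (x,y)\<in>Or \<Longrightarrow> (y,x)\<notin>Or"
    and h: "(a,b)\<in>Or" "(b,c)\<in>Or" "(a,c)\<in>Or" "(a',b')\<in>Or" "(b',c')\<in>Or" "(a',c')\<in>Or"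
    and eq: "{a,b,c} = {a',b',c'}"
  shows "a = a' \<and> b = b' \<and> c = c'"
proof -
  have m: "a' \<in> {a,b,c}" "b' \<in> {a,b,c}" "c' \<in> {a,b,c}" "a \<in> {a',b',c'}" "b \<in> {a',b',c'}" "c \<in> {a',b',c'}"
    using eq by auto
  have nd: "a \<noteq> b" "b \<noteq> c" "a \<noteq> c" "a' \<noteq> b'" "b' \<noteq> c'" "a' \<noteq> c'" using h as by blast+
  show ?thesis using m nd h as by (smt (verit) insertE singletonD)
qed

definition Tri :: "'a set set \<Rightarrow> 'a set set" where
  "Tri E = {{a,b,c} | a b c. {a,b} \<in> E \<and> {b,c} \<in> E \<and> {a,c} \<in> E}"

lemma Tt_card:
  assumes sg: "simple_graph V E" and ao: "acyclic_orientation E Or"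
  shows "card (Tt E Or) = card (Tri E)"
proof -
  have or: "orientation E Or" and ac: "acyclic Or" using ao unfolding acyclic_orientation_def by auto
  have as: "\<And>x y. (x,y)\<in>Or \<Longrightarrow> (y,x)\<notin>Or" using or_arc[OF or] by blast
  define \<phi> where "\<phi> = (\<lambda>(v::'a,w::'a,w'::'a). {w,v,w'})"
  have third: "(w,w') \<in> Or" if "(v,w,w') \<in> Tt E Or" for v w w'
  proof -
    have h: "(w,v) \<in> Or" "(v,w') \<in> Or" "{w,w'} \<in> E" using that unfolding Tt_def by auto
    have "w \<noteq> w'" using h as by blast
    then have "(w,w') \<in> Or \<or> (w',w) \<in> Or" using or_edge[OF or h(3)] by auto
    then show ?thesis using acyc_no3[OF ac h(1,2)] by auto
  qed
  have inj: "inj_on \<phi> (Tt E Or)"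
  proof (rule inj_onI)
    fix p q assume p: "p \<in> Tt E Or" and q: "q \<in> Tt E Or" and e: "\<phi> p = \<phi> q"
    obtain v w w' where pp: "p = (v,w,w')" by (cases p) auto
    obtain v2 w2 w2' where qq: "q = (v2,w2,w2')" by (cases q) auto
    have a1: "(w,v) \<in> Or" "(v,w') \<in> Or" "(w,w') \<in> Or" using p third[of v w w'] pp unfolding Tt_def by auto
    have a2: "(w2,v2) \<in> Or" "(v2,w2') \<in> Or" "(w2,w2') \<in> Or" using q third[of v2 w2 w2'] qq unfolding Tt_def by auto
    have "{w,v,w'} = {w2,v2,w2'}" using e pp qq unfolding \<phi>_def by simp
    then have "w = w2 \<and> v = v2 \<and> w' = w2'" using tri_inj_aux[OF as a1 a2] by blast
    then show "p = q" using pp qq by simp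
  qed
  have img: "\<phi> ` Tt E Or = Tri E"
  proof
    show "\<phi> ` Tt E Or \<subseteq> Tri E"
    proof
      fix X assume "X \<in> \<phi> ` Tt E Or"
      then obtain v w w' where p: "(v,w,w') \<in> Tt E Or" "X = {w,v,w'}" unfolding \<phi>_def by auto
      have h: "(w,v) \<in> Or" "(v,w') \<in> Or" "{w,w'} \<in> E" using p unfolding Tt_def by auto
      have "{w,v} \<in> E" "{v,w'} \<in> E" using or_arc[OF or h(1)] or_arc[OF or h(2)] by auto
      then show "X \<in> Tri E" using p(2) h(3) unfolding Tri_def by blast
    qed
    show "Tri E \<subseteq> \<phi> ` Tt E Or"
    proof
      fix X assume "X \<in> Tri E"
      then obtain a b c where X: "X = {a,b,c}" "{a,b} \<in> E" "{b,c} \<in> E" "{a,c} \<in> E"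
        unfolding Tri_def by blast
      have d: "a \<noteq> b" "b \<noteq> c" "a \<noteq> c" using sg_edge[OF sg X(2)] sg_edge[OF sg X(3)] sg_edge[OF sg X(4)] by auto
      have ab: "(a,b) \<in> Or \<or> (b,a) \<in> Or" using or_edge[OF or X(2) d(1)] .
      have bc: "(b,c) \<in> Or \<or> (c,b) \<in> Or" using or_edge[OF or X(3) d(2)] .
      have ac': "(a,c) \<in> Or \<or> (c,a) \<in> Or" using or_edge[OF or X(4) d(3)] .
      have e1: "{a,c} \<in> E" "{c,a} \<in> E" "{a,b} \<in> E" "{b,a} \<in> E" "{b,c} \<in> E" "{c,b} \<in> E"
        using X by (auto simp: insert_commute)
      have mk: "\<phi> (v,w,w') \<in> \<phi> ` Tt E Or" if "(w,v) \<in> Or" "(v,w') \<in> Or" "{w,w'} \<in> E" for v w w'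
        using that unfolding Tt_def by (intro imageI) auto
      from ab bc ac' show "X \<in> \<phi> ` Tt E Or"
      proof (elim disjE)
        assume "(a,b) \<in> Or" "(b,c) \<in> Or"
        then show ?thesis using mk[of a b c] e1 X(1) unfolding \<phi>_def by (auto simp: insert_commute)
      next
        assume "(a,b) \<in> Or" "(c,b) \<in> Or" "(a,c) \<in> Or"
        then show ?thesis using mk[of a c b] e1 X(1) unfolding \<phi>_def by (auto simp: insert_commute)
      next
        assume "(a,b) \<in> Or" "(c,b) \<in> Or" "(c,a) \<in> Or"
        then show ?thesis using mk[of c a b] e1 X(1) unfolding \<phi>_def by (auto simp: insert_commute)
      next
        assume "(b,a) \<in> Or" "(b,c) \<in> Or" "(a,c) \<in> Or"
        then show ?thesis using mk[of b a c] e1 X(1) unfolding \<phi>_def by (auto simp: insert_commute)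
      next
        assume "(b,a) \<in> Or" "(b,c) \<in> Or" "(c,a) \<in> Or"
        then show ?thesis using mk[of b c a] e1 X(1) unfolding \<phi>_def by (auto simp: insert_commute)
      next
        assume "(b,a) \<in> Or" "(c,b) \<in> Or"
        then show ?thesis using mk[of c b a] e1 X(1) unfolding \<phi>_def by (auto simp: insert_commute)
      next
        assume "(a,b) \<in> Or" "(b,c) \<in> Or"
        then show ?thesis using mk[of a b c] e1 X(1) unfolding \<phi>_def by (auto simp: insert_commute)
      next
        assume "(b,a) \<in> Or" "(c,b) \<in> Or"
        then show ?thesis using mk[of c b a] e1 X(1) unfolding \<phi>_def by (auto simp: insert_commute)
      qed
    qed
  qed
  show ?thesis using card_image[OF inj] img by simp
qed



lemma sq_vertex:
  assumes sg: "simple_graph V E" and or: "orientation E Or"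
  shows "(real_of_int (zvertex Or v))^2
     = real (card {w. {v,w} \<in> E})^2 - 4 * real (card {w. (w,v) \<in> Or} * card {w. (v,w) \<in> Or})"
proof -
  let ?o = "{w. (v,w) \<in> Or}" and ?i = "{w. (w,v) \<in> Or}" and ?N = "{w. {v,w} \<in> E}"
  have finN: "finite ?N"
  proof (rule finite_subset)
    show "?N \<subseteq> V" using sg_edge[OF sg] by auto
    show "finite V" using sg unfolding simple_graph_def by auto
  qed
  have un: "?o \<union> ?i = ?N"
  proof
    show "?o \<union> ?i \<subseteq> ?N"
    proof
      fix w assume "w \<in> ?o \<union> ?i"
      then show "w \<in> ?N"
      proof
        assume "w \<in> ?o" then show "w \<in> ?N" using or_arc[OF or] by auto
      next
        assume "w \<in> ?i" then have "{w,v} \<in> E" using or_arc[OF or] by auto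
        moreover have "{w,v} = {v,w}" by (rule insert_commute)
        ultimately show "w \<in> ?N" by simp
      qed
    qed
    show "?N \<subseteq> ?o \<union> ?i"
    proof
      fix w assume "w \<in> ?N"
      then have e: "{v,w} \<in> E" by simp
      then have "v \<noteq> w" using sg_edge[OF sg e] by auto
      then show "w \<in> ?o \<union> ?i" using or_edge[OF or e] by auto
    qed
  qed
  have dis: "?o \<inter> ?i = {}" using or_arc[OF or] by blast
  have fo: "finite ?o" "finite ?i" using finN un by (metis finite_Un)+
  have c: "card ?o + card ?i = card ?N" using card_Un_disjoint[OF fo dis] un by simp
  have "(real_of_int (zvertex Or v))^2 = (real (card ?o) - real (card ?i))^2"
    unfolding zvertex_def by simp
  also have "\<dots> = (real (card ?o) + real (card ?i))^2 - 4 * (real (card ?i) * real (card ?o))"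
    by (simp add: power2_eq_square algebra_simps)
  also have "real (card ?o) + real (card ?i) = real (card ?N)" using c by (metis of_nat_add)
  finally show ?thesis by simp
qed

lemma sumsq:
  assumes sg: "simple_graph V E" and or: "orientation E Or"
  shows "(\<Sum>v\<in>V. (real_of_int (zvertex Or v))^2)
     = (\<Sum>v\<in>V. real (card {w. {v,w} \<in> E})^2) - 4 * real (card (Tt E Or) + card (Ti E Or))"
proof -
  have finV: "finite V" using sg unfolding simple_graph_def by auto
  have OV: "Or \<subseteq> V \<times> V" by (rule or_sub[OF sg or])
  have fi1: "finite {w. (w,v) \<in> Or}" for v by (rule finite_subset[OF _ finV]) (use OV in auto)
  have fi2: "finite {w. (v,w) \<in> Or}" for v by (rule finite_subset[OF _ finV]) (use OV in auto)
  define S where "S = Sigma V (\<lambda>v. {w. (w,v) \<in> Or} \<times> {w. (v,w) \<in> Or})"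
  have finS: "finite S" unfolding S_def
    by (rule finite_SigmaI[OF finV]) (rule finite_cartesian_product; rule finite_subset[OF _ finV]; use OV in auto)
  have cS: "card S = (\<Sum>v\<in>V. card {w. (w,v) \<in> Or} * card {w. (v,w) \<in> Or})"
    unfolding S_def
    by (subst card_SigmaI) (auto simp: card_cartesian_product fi1 fi2 finV)
  have "S = Tt E Or \<union> Ti E Or" unfolding S_def Tt_def Ti_def using OV by auto
  moreover have "Tt E Or \<inter> Ti E Or = {}" unfolding Tt_def Ti_def by auto
  ultimately have "card S = card (Tt E Or) + card (Ti E Or)" using finS
    by (metis card_Un_disjoint finite_Un)
  then have e: "real (card (Tt E Or) + card (Ti E Or)) = (\<Sum>v\<in>V. real (card {w. (w,v) \<in> Or} * card {w. (v,w) \<in> Or}))"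
  proof -
    have "real (card (Tt E Or) + card (Ti E Or)) = real (card S)" using \<open>card S = card (Tt E Or) + card (Ti E Or)\<close> by simp
    also have "\<dots> = real (\<Sum>v\<in>V. card {w. (w,v) \<in> Or} * card {w. (v,w) \<in> Or})" by (simp only: cS)
    also have "\<dots> = (\<Sum>v\<in>V. real (card {w. (w,v) \<in> Or} * card {w. (v,w) \<in> Or}))" by (rule of_nat_sum)
    finally show ?thesis .
  qed
  show ?thesis unfolding e sq_vertex[OF sg or] by (simp add: sum_subtractf sum_distrib_left)
qed



lemma acyc_props:
  assumes sg: "simple_graph V E" and ao: "acyclic_orientation E Or"
  shows "Or\<^sup>+ \<subseteq> V \<times> V" "\<And>x. (x,x) \<notin> Or\<^sup>+" "\<And>x y z. (x,y) \<in> Or\<^sup>+ \<Longrightarrow> (y,z) \<in> Or\<^sup>+ \<Longrightarrow> (x,z) \<in> Or\<^sup>+"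
proof -
  have or: "orientation E Or" and ac: "acyclic Or" using ao unfolding acyclic_orientation_def by auto
  show "Or\<^sup>+ \<subseteq> V \<times> V" using or_sub[OF sg or] by (rule trancl_subset_Sigma)
  show "\<And>x. (x,x) \<notin> Or\<^sup>+" using ac unfolding acyclic_def by auto
  show "\<And>x y z. (x,y) \<in> Or\<^sup>+ \<Longrightarrow> (y,z) \<in> Or\<^sup>+ \<Longrightarrow> (x,z) \<in> Or\<^sup>+" by (rule trancl_trans)
qed

lemma trancl_trans_all: "\<forall>x y z. (x,y) \<in> r\<^sup>+ \<longrightarrow> (y,z) \<in> r\<^sup>+ \<longrightarrow> (x,z) \<in> r\<^sup>+"
  by (meson trancl_trans)

lemma num_linext_eq:
  assumes sg: "simple_graph V E" and ao: "acyclic_orientation E Or"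
  shows "num_linext V Or = card (spo.lin V (Or\<^sup>+))"
proof -
  interpret spo V "Or\<^sup>+" using acyc_props[OF sg ao] sg unfolding simple_graph_def by unfold_locales auto
  show ?thesis unfolding num_linext_def linear_extensions_def lin_def induced_less_def by simp
qed

lemma cmp_linext:
  assumes sg: "simple_graph V E" and ao1: "acyclic_orientation E O1" and t2: "transitive_orientation E O2"
  shows "num_linext V O1 \<le> num_linext V O2"
    and "\<not> transitive_orientation E O1 \<Longrightarrow> num_linext V O1 < num_linext V O2"
proof -
  have ao2: "acyclic_orientation E O2" using t2 unfolding transitive_orientation_def by auto
  have or1: "orientation E O1" using ao1 unfolding acyclic_orientation_def by auto
  have or2: "orientation E O2" using ao2 unfolding acyclic_orientation_def by auto
  have tc2: "O2\<^sup>+ = O2" by (rule trans_tc[OF sg t2])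
  have finV: "finite V" using sg unfolding simple_graph_def by auto
  have QP0: "(x,y) \<in> O1\<^sup>+ \<or> (y,x) \<in> O1\<^sup>+" if "(x,y) \<in> O2\<^sup>+" for x y
  proof -
    have "(x,y) \<in> O2" using that tc2 by simp
    then have "{x,y} \<in> E" "x \<noteq> y" using or_arc[OF or2] by auto
    then have "(x,y) \<in> O1 \<or> (y,x) \<in> O1" using or_edge[OF or1] by auto
    then show ?thesis by auto
  qed
  have QP: "\<forall>x y. (x,y) \<in> O2\<^sup>+ \<longrightarrow> (x,y) \<in> O1\<^sup>+ \<or> (y,x) \<in> O1\<^sup>+" using QP0 by blast
  note p = acyc_props[OF sg ao1]
  note q = acyc_props[OF sg ao2]
  note c1 = compare(1)[where V=V and P="O1\<^sup>+" and Q="O2\<^sup>+", OF finV p(1) allI[OF p(2)] trancl_trans_all q(1) allI[OF q(2)] trancl_trans_all QP]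
  note c2 = compare(2)[where V=V and P="O1\<^sup>+" and Q="O2\<^sup>+", OF finV p(1) allI[OF p(2)] trancl_trans_all q(1) allI[OF q(2)] trancl_trans_all QP]
  show "num_linext V O1 \<le> num_linext V O2"
    using c1 num_linext_eq[OF sg ao1] num_linext_eq[OF sg ao2] by simp
  assume nt: "\<not> transitive_orientation E O1"
  have sup: "E \<subseteq> {{u, v} | u v. (u, v) \<in> O1\<^sup>+}"
  proof
    fix e assume eE: "e \<in> E"
    then obtain u v where uv: "e = {u,v}" "u \<noteq> v" using sg unfolding simple_graph_def by blast
    then have "(u,v) \<in> O1 \<or> (v,u) \<in> O1" using or_edge[OF or1] eE by auto
    then show "e \<in> {{u, v} | u v. (u, v) \<in> O1\<^sup>+}" using uv by (auto simp: insert_commute)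
  qed
  have "{{u, v} | u v. (u, v) \<in> O1\<^sup>+} \<noteq> E"
    using nt ao1 unfolding transitive_orientation_def induced_less_def by auto
  then obtain a b where ab: "(a,b) \<in> O1\<^sup>+" "{a,b} \<notin> E" using sup by blast
  have "(a,b) \<notin> O2\<^sup>+" "(b,a) \<notin> O2\<^sup>+"
  proof -
    show "(a,b) \<notin> O2\<^sup>+" using ab(2) or_arc[OF or2] tc2 by auto
    show "(b,a) \<notin> O2\<^sup>+"
    proof
      assume "(b,a) \<in> O2\<^sup>+"
      then have "{b,a} \<in> E" using or_arc[OF or2] tc2 by auto
      then show False using ab(2) by (simp add: insert_commute)
    qed
  qed
  then have ex: "\<exists>a b. (a, b) \<in> O1\<^sup>+ \<and> (a, b) \<notin> O2\<^sup>+ \<and> (b, a) \<notin> O2\<^sup>+" using ab(1) by blast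
  have "card (spo.lin V (O1\<^sup>+)) < card (spo.lin V (O2\<^sup>+))" by (rule c2[OF ex])
  then show "num_linext V O1 < num_linext V O2"
    using num_linext_eq[OF sg ao1] num_linext_eq[OF sg ao2] by simp
qed

lemma znorm_eq:
  assumes sg: "simple_graph V E" and ao: "acyclic_orientation E Or"
  shows "znorm V Or = sqrt ((\<Sum>v\<in>V. real (card {w. {v,w} \<in> E})^2) - 4 * real (card (Tri E) + card (Ti E Or)))"
proof -
  have or: "orientation E Or" using ao unfolding acyclic_orientation_def by auto
  show ?thesis unfolding znorm_def sumsq[OF sg or] Tt_card[OF sg ao] ..
qed

lemma Ti_fin:
  assumes sg: "simple_graph V E" and or: "orientation E Or"
  shows "finite (Ti E Or)"
proof -
  have finV: "finite V" using sg unfolding simple_graph_def by auto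
  have OV: "Or \<subseteq> V \<times> V" by (rule or_sub[OF sg or])
  have "Ti E Or \<subseteq> V \<times> V \<times> V" unfolding Ti_def using OV by auto
  then show ?thesis using finV by (meson finite_SigmaI finite_subset)
qed

theorem theorem5p3:
  fixes V :: "'a set" and E :: "'a set set" and Or :: "('a \<times> 'a) set"
  assumes "comparability_graph V E"
    and "acyclic_orientation E Or"
  shows "((\<forall>Or'. acyclic_orientation E Or' \<longrightarrow> znorm V Or' \<le> znorm V Or)
            \<longleftrightarrow> transitive_orientation E Or)
       \<and> (transitive_orientation E Or \<longleftrightarrow> num_linext V Or = eps V E)"
proof -
  have sg: "simple_graph V E" using assms(1) unfolding comparability_graph_def by auto
  have finV: "finite V" using sg unfolding simple_graph_def by auto
  obtain R where R: "R \<subseteq> V \<times> V" "irrefl R" "trans R"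
    "\<forall>u\<in>V. \<forall>v\<in>V. u \<noteq> v \<longrightarrow> ({u, v} \<in> E \<longleftrightarrow> (u, v) \<in> R \<or> (v, u) \<in> R)"
    using assms(1) unfolding comparability_graph_def by blast
  have orR: "orientation E R"
    unfolding orientation_def
  proof (intro conjI allI impI ballI)
    fix p assume "p \<in> R"
    then obtain u v where p: "p = (u,v)" "(u,v) \<in> R" by (cases p) auto
    have "u \<noteq> v" using p R(2) unfolding irrefl_def by auto
    moreover have "u \<in> V" "v \<in> V" using p R(1) by auto
    ultimately show "case p of (u, v) \<Rightarrow> {u, v} \<in> E \<and> u \<noteq> v" using R(4) p by auto
  next
    fix u v assume e: "{u,v} \<in> E \<and> u \<noteq> v"
    have "u \<in> V" "v \<in> V" using sg_edge[OF sg] e by auto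
    then have "(u, v) \<in> R \<or> (v, u) \<in> R" using R(4) e by auto
    moreover have "\<not> ((u, v) \<in> R \<and> (v, u) \<in> R)" using R(2,3) unfolding irrefl_def trans_def by blast
    ultimately show "(u, v) \<in> R \<longleftrightarrow> (v, u) \<notin> R" by blast
  qed
  have tcR: "R\<^sup>+ = R" using R(3) by (rule trancl_id)
  have aoR: "acyclic_orientation E R"
    unfolding acyclic_orientation_def acyclic_def using orR tcR R(2) unfolding irrefl_def by auto
  have tiR: "Ti E R = {}"
  proof -
    have "{w,w'} \<in> E" if "(w,v) \<in> R" "(v,w') \<in> R" for v w w'
    proof -
      have "(w,w') \<in> R" using that R(3) unfolding trans_def by blast
      then show ?thesis using or_arc[OF orR] by auto
    qed
    then show ?thesis unfolding Ti_def by auto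
  qed
  have tR: "transitive_orientation E R" using trans_char[OF sg aoR] tiR by simp
  define D where "D = (\<Sum>v\<in>V. real (card {w. {v,w} \<in> E})^2)"
  define tri where "tri = card (Tri E)"
  have zn: "\<And>O'. acyclic_orientation E O' \<Longrightarrow> znorm V O' = sqrt (D - 4 * real (tri + card (Ti E O')))"
    unfolding D_def tri_def by (rule znorm_eq[OF sg])
  have part1: "(\<forall>Or'. acyclic_orientation E Or' \<longrightarrow> znorm V Or' \<le> znorm V Or) \<longleftrightarrow> transitive_orientation E Or"
  proof
    assume max: "\<forall>Or'. acyclic_orientation E Or' \<longrightarrow> znorm V Or' \<le> znorm V Or"
    show "transitive_orientation E Or"
    proof (rule ccontr)
      assume "\<not> transitive_orientation E Or"
      then have "Ti E Or \<noteq> {}" using trans_char[OF sg assms(2)] by simp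
      moreover have "finite (Ti E Or)"
        using Ti_fin[OF sg] assms(2) unfolding acyclic_orientation_def by auto
      ultimately have "card (Ti E Or) > 0" by (simp add: card_gt_0_iff)
      then have "D - 4 * real (tri + card (Ti E Or)) < D - 4 * real (tri + card (Ti E R))"
        using tiR by simp
      then have "znorm V Or < znorm V R" using zn[OF assms(2)] zn[OF aoR] by (simp add: real_sqrt_less_mono)
      then show False using max aoR by fastforce
    qed
  next
    assume t: "transitive_orientation E Or"
    have ti: "Ti E Or = {}" using trans_char[OF sg assms(2)] t by simp
    show "\<forall>Or'. acyclic_orientation E Or' \<longrightarrow> znorm V Or' \<le> znorm V Or"
    proof (intro allI impI)
      fix O' assume ao': "acyclic_orientation E O'"
      have "D - 4 * real (tri + card (Ti E O')) \<le> D - 4 * real (tri + card (Ti E Or))"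
        using ti by simp
      then show "znorm V O' \<le> znorm V Or" using zn[OF ao'] zn[OF assms(2)] by (simp add: real_sqrt_le_mono)
    qed
  qed
  define M where "M = {num_linext V O' | O'. acyclic_orientation E O'}"
  have finM: "finite M"
  proof -
    have "{O'. acyclic_orientation E O'} \<subseteq> Pow (V \<times> V)"
      using or_sub[OF sg] unfolding acyclic_orientation_def by auto
    then have "finite {O'. acyclic_orientation E O'}" using finV by (meson finite_Pow_iff finite_SigmaI finite_subset)
    moreover have "M = num_linext V ` {O'. acyclic_orientation E O'}" unfolding M_def by auto
    ultimately show ?thesis by simp
  qed
  have epsM: "eps V E = Max M" unfolding eps_def M_def ..
  have part2: "transitive_orientation E Or \<longleftrightarrow> num_linext V Or = eps V E"
  proof
    assume t: "transitive_orientation E Or"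
    have "Max M = num_linext V Or"
    proof (rule Max_eqI[OF finM])
      fix y assume "y \<in> M"
      then obtain O' where "y = num_linext V O'" "acyclic_orientation E O'" unfolding M_def by auto
      then show "y \<le> num_linext V Or" using cmp_linext(1)[OF sg _ t] by simp
    next
      show "num_linext V Or \<in> M" unfolding M_def using assms(2) by auto
    qed
    then show "num_linext V Or = eps V E" using epsM by simp
  next
    assume eq: "num_linext V Or = eps V E"
    show "transitive_orientation E Or"
    proof (rule ccontr)
      assume "\<not> transitive_orientation E Or"
      then have "num_linext V Or < num_linext V R" using cmp_linext(2)[OF sg assms(2) tR] by simp
      moreover have "num_linext V R \<le> Max M" using finM aoR unfolding M_def by (auto intro: Max_ge)
      ultimately show False using eq epsM by simp
    qed
  qed
  show ?thesis using part1 part2 by blast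
qed

end
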